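(* Let $p,q$ be nonzero polynomials. Then $[p]=[q]$ in $\mathcal H$ if and only if $R(p)=R(q)$ (as multisets).
   Context: Standing assumptions: $\Omega\subset\mathbb C$ is a domain with $0\in\Omega$, $\mathcal H$ is a Hilbert space of analytic functions on $\Omega$ with bounded point evaluations at points of $\Omega$, the shift $(Sf)(z)=zf(z)$ is bounded on $\mathcal H$, and the polynomials $\mathcal P$ are dense in $\mathcal H$. For $g\in\mathcal H$, $[g]$ is the closure in $\mathcal H$ of $\operatorname{span}\{z^kg:k\ge0\}$. A point $\beta\in\mathbb C$ is reproducible of order $m\ge0$ if $p\mapsto p^{(m)}(\beta)$ on $\mathcal P$ extends to a bounded linear functional on $\mathcal H$; $\beta$ is a reproducible point if reproducible of order $0$; reproducibility of order $m$ implies that of all orders $j\le m$; $\operatorname{ro}(\beta)\in\{0,1,\dots\}\cup\{\infty\}$ is the supremum of orders of reproducibility. For a nonzero polynomial $p$, $R(p)$ is the multiset of reproducible zeros: each reproducible point $\beta$ at which $p$ has a zero of order $m\ge1$ is listed $\min\{m,\operatorname{ro}(\beta)+1\}$ times; non-reproducible zeros are omitted. *)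

theory Defs
  imports "HOL-Analysis.Analysis" "HOL-Computational_Algebra.Polynomial" "HOL-Library.Multiset"
    "HOL-Library.Extended_Nat"
begin

text \<open>The abstract Hilbert space is a type 'h of class real_inner + complete_space;
  its complex structure is given by J (multiplication by i), and
  ev x z is the value at z of the analytic function represented by x
  (only the values on Omega matter).  Complex scalar multiplication by c is
  Re c *R x + Im c *R J x.\<close>

definition hfs :: "complex set \<Rightarrow> ('h::{real_inner,complete_space} \<Rightarrow> 'h) \<Rightarrow> ('h \<Rightarrow> complex \<Rightarrow> complex) \<Rightarrow> bool" where
  "hfs \<Omega> J ev \<longleftrightarrow>
     open \<Omega> \<and> connected \<Omega> \<and> 0 \<in> \<Omega> \<and>
     \<comment> \<open>complex Hilbert space structure\<close>
     linear J \<and> (\<forall>x. J (J x) = - x) \<and> (\<forall>x. norm (J x) = norm x) \<and>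
     \<comment> \<open>elements are analytic functions on Omega, identified with their values there\<close>
     (\<forall>x y. ev (x + y) = (\<lambda>z. ev x z + ev y z)) \<and>
     (\<forall>r x. ev (r *\<^sub>R x) = (\<lambda>z. complex_of_real r * ev x z)) \<and>
     (\<forall>x. ev (J x) = (\<lambda>z. \<i> * ev x z)) \<and>
     (\<forall>x. ev x holomorphic_on \<Omega>) \<and>
     (\<forall>x y. (\<forall>z\<in>\<Omega>. ev x z = ev y z) \<longrightarrow> x = y) \<and>
     \<comment> \<open>bounded point evaluations\<close>
     (\<forall>w\<in>\<Omega>. bounded_linear (\<lambda>x. ev x w)) \<and>
     \<comment> \<open>polynomials belong to H and are dense\<close>
     (\<forall>p::complex poly. \<exists>x. \<forall>z\<in>\<Omega>. ev x z = poly p z) \<and>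
     closure {x. \<exists>p::complex poly. \<forall>z\<in>\<Omega>. ev x z = poly p z} = UNIV \<and>
     \<comment> \<open>the shift is bounded\<close>
     (\<exists>S. bounded_linear S \<and> (\<forall>x. \<forall>z\<in>\<Omega>. ev (S x) z = z * ev x z))"

definition cyc :: "complex set \<Rightarrow> ('h::{real_inner,complete_space} \<Rightarrow> complex \<Rightarrow> complex) \<Rightarrow> (complex \<Rightarrow> complex) \<Rightarrow> 'h set" where
  "cyc \<Omega> ev f = closure {x. \<exists>(n::nat) (c::nat \<Rightarrow> complex).
       \<forall>z\<in>\<Omega>. ev x z = (\<Sum>k\<le>n. c k * z ^ k * f z)}"

definition repro :: "complex set \<Rightarrow> ('h::{real_inner,complete_space} \<Rightarrow> 'h) \<Rightarrow> ('h \<Rightarrow> complex \<Rightarrow> complex) \<Rightarrow> nat \<Rightarrow> complex \<Rightarrow> bool" where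
  "repro \<Omega> J ev m \<beta> \<longleftrightarrow>
     (\<exists>L::'h \<Rightarrow> complex. bounded_linear L \<and> (\<forall>x. L (J x) = \<i> * L x) \<and>
        (\<forall>x (p::complex poly). (\<forall>z\<in>\<Omega>. ev x z = poly p z) \<longrightarrow> L x = poly ((pderiv ^^ m) p) \<beta>))"

definition ro :: "complex set \<Rightarrow> ('h::{real_inner,complete_space} \<Rightarrow> 'h) \<Rightarrow> ('h \<Rightarrow> complex \<Rightarrow> complex) \<Rightarrow> complex \<Rightarrow> enat" where
  "ro \<Omega> J ev \<beta> = Sup {enat m | m. repro \<Omega> J ev m \<beta>}"

definition Rz :: "complex set \<Rightarrow> ('h::{real_inner,complete_space} \<Rightarrow> 'h) \<Rightarrow> ('h \<Rightarrow> complex \<Rightarrow> complex) \<Rightarrow> complex poly \<Rightarrow> complex multiset" where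
  "Rz \<Omega> J ev p = (\<Sum>\<beta>\<in>{z. poly p z = 0}.
       if repro \<Omega> J ev 0 \<beta>
       then replicate_mset (the_enat (min (enat (order \<beta> p)) (ro \<Omega> J ev \<beta> + 1))) \<beta>
       else {#})"

end

theory Submission
  imports Defs "HOL-Computational_Algebra.Fundamental_Theorem_Algebra"
begin


lemma nearest_exists:
  fixes C :: "'a::{real_inner,complete_space} set"
  assumes "closed C" "convex C" "C \<noteq> {}"
  shows "\<exists>m\<in>C. \<forall>y\<in>C. dist a m \<le> dist a y"
proof -
  define d where "d = infdist a C"
  have d0: "0 \<le> d" by (simp add: d_def infdist_nonneg)
  have dle: "\<And>y. y \<in> C \<Longrightarrow> d \<le> dist a y" by (simp add: d_def infdist_le)
  have "\<forall>n::nat. \<exists>y\<in>C. dist a y < d + 1 / (Suc n)"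
  proof
    fix n :: nat
    have "(INF y\<in>C. dist a y) < d + 1 / Suc n"
      using infdist_notempty[OF assms(3), of a] d_def by simp
    then show "\<exists>y\<in>C. dist a y < d + 1 / (Suc n)"
      by (subst (asm) cINF_less_iff) (auto intro!: bdd_belowI[of _ 0] simp: assms(3))
  qed
  then obtain f where fC: "\<And>n. f n \<in> C" and fd: "\<And>n. dist a (f n) < d + 1 / Suc n"
    by metis
  have par: "norm (f n - f k)^2 \<le> 2 * (d + 1/Suc n)^2 + 2 * (d + 1/Suc k)^2 - 4 * d^2" for n k
  proof -
    have mid: "(1/2) *\<^sub>R f n + (1/2) *\<^sub>R f k \<in> C"
      using convexD[OF assms(2) fC fC, of "1/2" "1/2"] by simp
    have "d \<le> dist a ((1/2) *\<^sub>R f n + (1/2) *\<^sub>R f k)" using dle[OF mid] .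
    also have "\<dots> = norm ((1/2) *\<^sub>R ((a - f n) + (a - f k)))"
    proof -
      have "(1/2::real) *\<^sub>R a + (1/2) *\<^sub>R a = a" by (simp flip: scaleR_add_left)
      then show ?thesis by (simp add: dist_norm algebra_simps)
    qed
    also have "\<dots> = norm ((a - f n) + (a - f k)) / 2" by simp
    finally have "2 * d \<le> norm ((a - f n) + (a - f k))" by simp
    then have "(2 * d)^2 \<le> norm ((a - f n) + (a - f k))^2"
      using d0 by (intro power_mono) auto
    then have h1: "4 * d^2 \<le> norm ((a - f n) + (a - f k))^2" by (simp add: power_mult_distrib)
    have pl: "norm (f n - f k)^2 + norm ((a - f n) + (a - f k))^2 = 2 * norm (a - f n)^2 + 2 * norm (a - f k)^2"
      by (simp add: power2_norm_eq_inner inner_add inner_diff inner_commute algebra_simps)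
    have "norm (a - f n)^2 \<le> (d + 1/Suc n)^2"
      using fd[of n] by (simp add: dist_norm power_mono)
    moreover have "norm (a - f k)^2 \<le> (d + 1/Suc k)^2"
      using fd[of k] by (simp add: dist_norm power_mono)
    ultimately show ?thesis using h1 pl by linarith
  qed
  have "Cauchy f"
  proof (rule metric_CauchyI)
    fix e :: real assume e: "0 < e"
    define c where "c = 8 * d + 4"
    have c: "c > 0" using d0 by (simp add: c_def)
    obtain N :: nat where N: "1 / Suc N < e^2 / c"
      using reals_Archimedean e c
      by (metis divide_pos_pos zero_less_power Suc_eq_plus1 inverse_eq_divide of_nat_Suc)
    show "\<exists>M. \<forall>m\<ge>M. \<forall>n\<ge>M. dist (f m) (f n) < e"
    proof (intro exI allI impI)
      fix m n assume mn: "N \<le> m" "N \<le> n"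
      define t where "t = 1 / real (Suc N)"
      have t0: "0 < t" "t \<le> 1" by (auto simp: t_def)
      have tm: "1 / real (Suc m) \<le> t" "1 / real (Suc n) \<le> t"
        using mn by (auto simp: t_def frac_le)
      have "(d + 1/Suc m)^2 \<le> (d + t)^2" "(d + 1/Suc n)^2 \<le> (d + t)^2"
        using tm d0 by (auto intro!: power_mono)
      then have "norm (f m - f n)^2 \<le> 4 * (d+t)^2 - 4 * d^2" using par[of m n] by linarith
      also have "\<dots> = t * (8 * d + 4 * t)" by (simp add: power2_eq_square algebra_simps)
      also have "\<dots> \<le> t * c" using t0 d0 by (auto simp: c_def intro!: mult_left_mono)
      also have "\<dots> < e^2" using N c by (simp add: t_def pos_divide_less_eq)
      finally have "norm (f m - f n)^2 < e^2" .
      then show "dist (f m) (f n) < e" using e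
        by (simp add: dist_norm power_less_imp_less_base)
    qed
  qed
  then obtain l where l: "f \<longlonglongrightarrow> l" using Cauchy_convergent_iff convergent_def by blast
  have lC: "l \<in> C" using closed_sequentially[OF assms(1) _ l] fC by auto
  have "(\<lambda>n. dist a (f n)) \<longlonglongrightarrow> dist a l" by (intro tendsto_intros l)
  moreover have "(\<lambda>n. d + 1 / real (Suc n)) \<longlonglongrightarrow> d + 0"
    by (intro tendsto_intros LIMSEQ_inverse_real_of_nat[unfolded inverse_eq_divide])
  ultimately have "dist a l \<le> d"
    using fd by (intro LIMSEQ_le) (auto intro: less_imp_le)
  then show ?thesis using lC dle by force
qed

lemma perp_exists:
  fixes S :: "'a::{real_inner,complete_space} set"
  assumes add: "\<And>x y. x \<in> S \<Longrightarrow> y \<in> S \<Longrightarrow> x + y \<in> S"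
    and scl: "\<And>x r. x \<in> S \<Longrightarrow> r *\<^sub>R x \<in> S" and z: "0 \<in> S"
    and u: "u \<notin> closure S"
  shows "\<exists>v. (\<forall>s\<in>S. inner s v = 0) \<and> inner u v \<noteq> 0"
proof -
  have cS: "convex S" unfolding convex_def using add scl by auto
  obtain m where mC: "m \<in> closure S" and mmin: "\<forall>y\<in>closure S. dist u m \<le> dist u y"
    using nearest_exists[of "closure S" u] cS z by auto
  define v where "v = u - m"
  have tr: "m + s \<in> closure S" if "s \<in> S" for s
  proof -
    have "(\<lambda>x. x + s) ` closure S \<subseteq> closure S"
    proof (rule image_closure_subset)
      show "continuous_on (closure S) (\<lambda>x. x + s)" by (intro continuous_intros)
      show "(\<lambda>x. x + s) ` S \<subseteq> closure S"
        using add that closure_subset by blast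
    qed simp
    then show ?thesis using mC by auto
  qed
  have perp: "inner s v = 0" if "s \<in> S" for s
  proof -
    have "inner (u - m) ((m + s) - m) \<le> 0"
      by (rule any_closest_point_dot[OF convex_closure[OF cS] closed_closure mC tr[OF that] mmin])
    moreover have "-s \<in> S" using scl[OF that, of "-1"] by simp
    then have "inner (u - m) ((m + - s) - m) \<le> 0"
      by (intro any_closest_point_dot[OF convex_closure[OF cS] closed_closure mC tr mmin])
    ultimately show ?thesis by (simp add: v_def inner_commute)
  qed
  have "closure S \<subseteq> {x. inner x v = 0}"
  proof (rule closure_minimal)
    show "closed {x. inner x v = 0}" using closed_hyperplane[of v 0] by (simp add: inner_commute)
    show "S \<subseteq> {x. inner x v = 0}" using perp by blast
  qed
  then have "inner m v = 0" using mC by auto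
  moreover have "v \<noteq> 0" using u mC by (auto simp: v_def)
  moreover have "u = v + m" by (simp add: v_def)
  ultimately have "inner u v \<noteq> 0"
    by (metis inner_add_left add.right_neutral inner_eq_zero_iff)
  then show ?thesis using perp by blast
qed




definition Dv :: "nat \<Rightarrow> complex poly \<Rightarrow> complex \<Rightarrow> complex" where
  "Dv j p b = poly ((pderiv^^j) p) b"

lemma pd_add: "(pderiv^^j) (p + q) = (pderiv^^j) p + (pderiv^^j) (q::complex poly)"
  by (induction j) (auto simp: pderiv_add)
lemma pd_smult: "(pderiv^^j) (smult c p) = smult c ((pderiv^^j) (p::complex poly))"
  by (induction j) (auto simp: pderiv_smult)
lemma pd_diff: "(pderiv^^j) (p - q) = (pderiv^^j) p - (pderiv^^j) (q::complex poly)"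
  by (induction j) (auto simp: pderiv_diff)
lemma pd_zero: "(pderiv^^j) (0::complex poly) = 0"
  by (induction j) auto
lemma pd_sum: "(pderiv^^j) (\<Sum>i\<in>A. f i) = (\<Sum>i\<in>A. (pderiv^^j) (f i :: complex poly))"
  by (induction A rule: infinite_finite_induct) (auto simp: pd_add pd_zero)

lemma Dv_add: "Dv j (p + q) b = Dv j p b + Dv j q b" by (simp add: Dv_def pd_add)
lemma Dv_diff: "Dv j (p - q) b = Dv j p b - Dv j q b" by (simp add: Dv_def pd_diff)
lemma Dv_smult: "Dv j (smult c p) b = c * Dv j p b" by (simp add: Dv_def pd_smult)
lemma Dv_sum: "Dv j (\<Sum>i\<in>A. f i) b = (\<Sum>i\<in>A. Dv j (f i) b)"
  by (simp add: Dv_def pd_sum poly_sum)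
lemma Dv_0: "Dv 0 p b = poly p b" by (simp add: Dv_def)
lemma Dv_zero: "Dv j 0 b = 0" by (simp add: Dv_def pd_zero)

lemma pd_linX:
  fixes X p :: "complex poly"
  assumes dX: "pderiv X = 1"
  shows "(pderiv^^Suc j) (X * p) = smult (of_nat (Suc j)) ((pderiv^^j) p) + X * (pderiv^^Suc j) p"
proof (induction j)
  case 0
  then show ?case by (simp add: pderiv_mult dX)
next
  case (Suc j)
  have "(pderiv^^Suc (Suc j)) (X * p) = pderiv ((pderiv^^Suc j) (X * p))" by simp
  also have "\<dots> = pderiv (smult (of_nat (Suc j)) ((pderiv^^j) p) + X * (pderiv^^Suc j) p)"
    using Suc by simp
  also have "\<dots> = smult (of_nat (Suc (Suc j))) ((pderiv^^Suc j) p) + X * (pderiv^^Suc (Suc j)) p"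
    by (simp add: pderiv_add pderiv_smult pderiv_mult dX of_nat_Suc smult_add_left add_ac numeral_mult_conv_smult)
  finally show ?case .
qed

lemma dlin: "pderiv [:-b,1:] = (1::complex poly)" by (simp add: pderiv_pCons)

lemma pd_lin: "(pderiv^^Suc j) ([:-b,1:] * p) =
   smult (of_nat (Suc j)) ((pderiv^^j) p) + [:-b,1:] * (pderiv^^Suc j) (p::complex poly)"
  by (rule pd_linX[OF dlin])

lemma Dv_lin0: "Dv 0 ([:-b,1:] * p) b = 0" by (simp add: Dv_def)
lemma Dv_linSuc: "Dv (Suc j) ([:-b,1:] * p) b = of_nat (Suc j) * Dv j p b"
  unfolding Dv_def pd_lin by simp

lemma Dv_pow_lt: "j < m \<Longrightarrow> Dv j ([:-b,1:]^m * p) b = 0"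
proof (induction m arbitrary: j)
  case 0 then show ?case by simp
next
  case (Suc m)
  have e: "[:-b,1:]^Suc m * p = [:-b,1:] * ([:-b,1:]^m * p)" by (simp only: power_Suc mult.assoc)
  show ?case
  proof (cases j)
    case 0 then show ?thesis unfolding e by (rule ssubst, intro Dv_lin0)
  next
    case (Suc j')
    have "Dv j ([:-b,1:]^Suc m * p) b = of_nat (Suc j') * Dv j' ([:-b,1:]^m * p) b"
      unfolding e Suc by (rule Dv_linSuc)
    then show ?thesis using Suc.IH[of j'] Suc.prems \<open>j = Suc j'\<close> by simp
  qed
qed

lemma Dv_pow_eq: "Dv m ([:-b,1:]^m * p) b = fact m * poly p b"
proof (induction m)
  case 0 then show ?case by (simp add: Dv_0)
next
  case (Suc m)
  have e: "[:-b,1:]^Suc m * p = [:-b,1:] * ([:-b,1:]^m * p)" by (simp only: power_Suc mult.assoc)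
  show ?case unfolding e Dv_linSuc Suc by (simp add: algebra_simps)
qed

lemma pd_high: "degree q < i \<Longrightarrow> (pderiv^^i) (q::complex poly) = 0"
proof (induction i arbitrary: q)
  case 0 then show ?case by simp
next
  case (Suc i)
  have e: "(pderiv^^Suc i) q = (pderiv^^i) (pderiv q)" by (simp add: funpow_Suc_right del: funpow.simps)
  show ?case
  proof (cases "degree q = 0")
    case True
    then have "pderiv q = 0" by (simp add: pderiv_eq_0_iff)
    then show ?thesis unfolding e by (simp add: pd_zero)
  next
    case False
    then have "degree (pderiv q) < i" using Suc.prems by (simp add: degree_pderiv)
    then show ?thesis unfolding e by (rule Suc.IH)
  qed
qed

lemma Dv_order: "p \<noteq> 0 \<Longrightarrow> Dv (order b p) p b \<noteq> 0"
proof -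
  assume p: "p \<noteq> 0"
  obtain f where f: "p = [:-b,1:]^order b p * f" and nd: "\<not> [:-b,1:] dvd f"
    using order_decomp[OF p] by blast
  have "poly f b \<noteq> 0" using nd by (simp add: poly_eq_0_iff_dvd)
  then show ?thesis by (subst f, simp only: Dv_pow_eq) simp
qed

lemma Dv_dvd: "j < n \<Longrightarrow> [:-b,1:]^n dvd p \<Longrightarrow> Dv j p b = 0"
  by (elim dvdE) (simp add: Dv_pow_lt)

lemma Dv_zero_dvd: "(\<forall>j<k. Dv j r b = 0) \<Longrightarrow> [:-b,1:]^k dvd r"
proof -
  assume h: "\<forall>j<k. Dv j r b = 0"
  show ?thesis
  proof (cases "r = 0")
    case False
    have "\<not> order b r < k" using h Dv_order[OF False, of b] by auto
    then show ?thesis by (simp add: order_divides)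
  qed simp
qed

lemma Dv_lin_pow: "Dv i ([:-b,1:]^j) b = (if i = j then fact i else 0)"
proof -
  consider "i < j" | "i = j" | "j < i" by linarith
  then show ?thesis
  proof cases
    case 1 then show ?thesis using Dv_pow_lt[of i j b 1] by simp
  next
    case 2 then show ?thesis using Dv_pow_eq[of j b 1] by simp
  next
    case 3
    have "degree ([:-b,1:]^j) = j" by (simp add: degree_power_eq)
    then show ?thesis using 3 by (simp add: Dv_def pd_high)
  qed
qed




definition sc :: "('h::real_vector \<Rightarrow> 'h) \<Rightarrow> complex \<Rightarrow> 'h \<Rightarrow> 'h" where
  "sc J c x = Re c *\<^sub>R x + Im c *\<^sub>R J x"

locale hsp =
  fixes Om :: "complex set" and J :: "'h::{real_inner,complete_space} \<Rightarrow> 'h"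
    and ev :: "'h \<Rightarrow> complex \<Rightarrow> complex"
  assumes H: "hfs Om J ev"
begin

lemma J_lin: "linear J" using H by (simp add: hfs_def)
lemma JJ: "J (J x) = - x" using H by (simp add: hfs_def)
lemma Jnorm: "norm (J x) = norm x" using H by (simp add: hfs_def)
lemma ev_add: "ev (x + y) z = ev x z + ev y z" using H by (simp add: hfs_def)
lemma ev_scaleR: "ev (r *\<^sub>R x) z = complex_of_real r * ev x z" using H by (simp add: hfs_def)
lemma ev_J: "ev (J x) z = \<i> * ev x z" using H by (simp add: hfs_def)
lemma ev_inj: "(\<And>z. z \<in> Om \<Longrightarrow> ev x z = ev y z) \<Longrightarrow> x = y" using H by (simp add: hfs_def)
lemma poly_ex: "\<exists>x. \<forall>z\<in>Om. ev x z = poly p z" using H by (simp add: hfs_def)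
lemma shift_ex: "\<exists>S. bounded_linear S \<and> (\<forall>x. \<forall>z\<in>Om. ev (S x) z = z * ev x z)"
  using H by (simp add: hfs_def)

lemma J_add: "J (x + y) = J x + J y" using J_lin by (simp add: linear_add)
lemma J_scaleR: "J (r *\<^sub>R x) = r *\<^sub>R J x" using J_lin by (simp add: linear_scale)
lemma J_diff: "J (x - y) = J x - J y" using J_lin by (simp add: linear_diff)
lemma J_sum: "J (\<Sum>i\<in>A. f i) = (\<Sum>i\<in>A. J (f i))" using J_lin by (simp add: linear_sum)

lemma J_bl: "bounded_linear J"
  by (rule bounded_linear_intro[of J 1]) (auto simp: J_add J_scaleR Jnorm)

lemma ev_zero: "ev 0 z = 0" using ev_scaleR[of 0 0 z] by simp
lemma ev_uminus: "ev (- x) z = - ev x z" using ev_scaleR[of "-1" x z] by simp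
lemma ev_diff: "ev (x - y) z = ev x z - ev y z"
  using ev_add[of x "- y" z] ev_uminus[of y z] by simp
lemma ev_sum: "ev (\<Sum>i\<in>A. f i) z = (\<Sum>i\<in>A. ev (f i) z)"
  by (induction A rule: infinite_finite_induct) (auto simp: ev_zero ev_add)
lemma ev_sc: "ev (sc J c x) z = c * ev x z"
proof -
  have "ev (sc J c x) z = (complex_of_real (Re c) + \<i> * complex_of_real (Im c)) * ev x z"
    by (simp add: sc_def ev_add ev_scaleR ev_J algebra_simps)
  then show ?thesis by (simp add: complex_eq[symmetric])
qed

lemma inner_JJ: "inner (J x) (J y) = inner x y"
proof -
  have "norm (J (x + y))^2 = norm (x + y)^2" by (simp add: Jnorm)
  then have "norm (J x + J y)^2 = norm (x + y)^2" by (simp add: J_add)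
  moreover have "inner (J x) (J x) = inner x x" by (metis Jnorm power2_norm_eq_inner)
  moreover have "inner (J y) (J y) = inner y y" by (metis Jnorm power2_norm_eq_inner)
  ultimately show ?thesis
    by (simp add: power2_norm_eq_inner inner_add inner_commute)
qed

lemma inner_Jskew: "inner x (J y) = - inner (J x) y"
  using inner_JJ[of x "J y"] by (simp add: JJ)

lemma sc_J: "sc J (\<i> * c) y = J (sc J c y)"
  by (simp add: sc_def J_add J_scaleR JJ algebra_simps)

lemma sc_bl: "bounded_linear f \<Longrightarrow> bounded_linear (\<lambda>x. sc J (f x) e)"
  unfolding sc_def
  by (intro bounded_linear_add bounded_linear_compose[OF bounded_linear_scaleR_left]
        bounded_linear_compose[OF bounded_linear_Re] bounded_linear_compose[OF bounded_linear_Im])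

lemma sc_bl2: "bounded_linear (sc J c)"
  unfolding sc_def
  by (intro bounded_linear_add bounded_linear_scaleR_right bounded_linear_compose[OF _ J_bl])

definition rep :: "'h \<Rightarrow> complex poly \<Rightarrow> bool" where
  "rep x p \<longleftrightarrow> (\<forall>z\<in>Om. ev x z = poly p z)"

definition P :: "complex poly \<Rightarrow> 'h" where "P p = (SOME x. rep x p)"

lemma rep_P: "rep (P p) p"
  unfolding P_def rep_def by (rule someI_ex[OF poly_ex])

lemma rep_unique: "rep x p \<Longrightarrow> rep y p \<Longrightarrow> x = y"
  unfolding rep_def by (intro ev_inj) auto

lemma rep_eqP: "rep x p \<Longrightarrow> x = P p" using rep_P rep_unique by blast

lemma rep_add: "rep x p \<Longrightarrow> rep y q \<Longrightarrow> rep (x + y) (p + q)"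
  by (simp add: rep_def ev_add)
lemma rep_diff: "rep x p \<Longrightarrow> rep y q \<Longrightarrow> rep (x - y) (p - q)"
  by (simp add: rep_def ev_diff)
lemma rep_sc: "rep x p \<Longrightarrow> rep (sc J c x) (smult c p)"
  by (simp add: rep_def ev_sc)
lemma rep_J: "rep x p \<Longrightarrow> rep (J x) (smult \<i> p)"
  by (simp add: rep_def ev_J)
lemma rep_scaleR: "rep x p \<Longrightarrow> rep (r *\<^sub>R x) (smult (complex_of_real r) p)"
  by (simp add: rep_def ev_scaleR)
lemma rep_zero: "rep 0 0" by (simp add: rep_def ev_zero)
lemma rep_sum: "(\<And>i. i \<in> A \<Longrightarrow> rep (x i) (p i)) \<Longrightarrow> rep (\<Sum>i\<in>A. x i) (\<Sum>i\<in>A. p i)"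
  by (induction A rule: infinite_finite_induct) (auto simp: rep_zero rep_add)

definition Sft :: "'h \<Rightarrow> 'h" where
  "Sft = (SOME S. bounded_linear S \<and> (\<forall>x. \<forall>z\<in>Om. ev (S x) z = z * ev x z))"

lemma Sft: "bounded_linear Sft" "\<And>x z. z \<in> Om \<Longrightarrow> ev (Sft x) z = z * ev x z"
  using someI_ex[OF shift_ex] unfolding Sft_def[symmetric] by auto

lemma Sft_pow_bl: "bounded_linear (Sft^^k)"
  by (induction k) (auto intro: bounded_linear_ident bounded_linear_compose[OF Sft(1)])

lemma Sft_pow_ev: "z \<in> Om \<Longrightarrow> ev ((Sft^^k) x) z = z^k * ev x z"
  by (induction k) (auto simp: Sft(2))

definition Mul :: "complex poly \<Rightarrow> 'h \<Rightarrow> 'h" where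
  "Mul f x = (\<Sum>k\<le>degree f. sc J (coeff f k) ((Sft^^k) x))"

lemma Mul_bl: "bounded_linear (Mul f)"
  unfolding Mul_def
  by (intro bounded_linear_sum bounded_linear_compose[OF sc_bl2 Sft_pow_bl])

lemma Mul_ev: "z \<in> Om \<Longrightarrow> ev (Mul f x) z = poly f z * ev x z"
  by (simp add: Mul_def ev_sum ev_sc Sft_pow_ev poly_altdef sum_distrib_right mult.assoc)

lemma rep_Mul: "rep x p \<Longrightarrow> rep (Mul f x) (f * p)"
  by (simp add: rep_def Mul_ev)

definition Cp :: "complex poly \<Rightarrow> 'h set" where
  "Cp q = {x. \<exists>r. rep x (r * q)}"

lemma cyc_eq: "cyc Om ev (poly q) = closure (Cp q)"
proof -
  have "{x. \<exists>(n::nat) (c::nat \<Rightarrow> complex). \<forall>z\<in>Om. ev x z = (\<Sum>k\<le>n. c k * z ^ k * poly q z)} = Cp q"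
  proof (intro set_eqI iffI)
    fix x assume "x \<in> {x. \<exists>(n::nat) (c::nat \<Rightarrow> complex). \<forall>z\<in>Om. ev x z = (\<Sum>k\<le>n. c k * z ^ k * poly q z)}"
    then obtain n c where h: "\<forall>z\<in>Om. ev x z = (\<Sum>k\<le>n. c k * z ^ k * poly q z)" by blast
    define r where "r = (\<Sum>k\<le>n. monom (c k) k)"
    have "rep x (r * q)" unfolding rep_def
      using h by (simp add: r_def poly_sum poly_monom sum_distrib_right)
    then show "x \<in> Cp q" by (auto simp: Cp_def)
  next
    fix x assume "x \<in> Cp q"
    then obtain r where "rep x (r * q)" by (auto simp: Cp_def)
    then have "\<forall>z\<in>Om. ev x z = (\<Sum>k\<le>degree r. coeff r k * z ^ k * poly q z)"
      by (simp add: rep_def poly_altdef[of r] sum_distrib_right)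
    then show "x \<in> {x. \<exists>(n::nat) (c::nat \<Rightarrow> complex). \<forall>z\<in>Om. ev x z = (\<Sum>k\<le>n. c k * z ^ k * poly q z)}"
      by blast
  qed
  then show ?thesis by (simp add: cyc_def)
qed

lemma P_in: "P q \<in> Cp q"
  unfolding Cp_def using rep_P[of q] by (metis (mono_tags) mem_Collect_eq mult_1)

lemma Cp_mult: "Cp (f * q) \<subseteq> Cp q"
  unfolding Cp_def by (auto simp: mult.assoc[symmetric])

lemma Mul_Cp: "Mul f ` Cp q \<subseteq> Cp (f * q)"
proof
  fix y assume "y \<in> Mul f ` Cp q"
  then obtain x r where y: "y = Mul f x" and r: "rep x (r * q)" by (auto simp: Cp_def)
  have e: "f * (r * q) = r * (f * q)" by (rule mult.left_commute)
  have "rep y (r * (f * q))" using rep_Mul[OF r, of f] unfolding y e .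
  then show "y \<in> Cp (f * q)" by (auto simp: Cp_def)
qed

lemma Mul_closure: "Mul f ` closure (Cp q) \<subseteq> closure (Cp (f * q))"
proof (rule image_closure_subset)
  show "continuous_on (closure (Cp q)) (Mul f)"
    by (intro linear_continuous_on Mul_bl)
  show "Mul f ` Cp q \<subseteq> closure (Cp (f * q))" using Mul_Cp closure_subset by blast
qed simp

lemma Gen: "P p \<in> closure (Cp q) \<Longrightarrow> closure (Cp p) \<subseteq> closure (Cp q)"
proof (rule closure_minimal)
  assume h: "P p \<in> closure (Cp q)"
  show "Cp p \<subseteq> closure (Cp q)"
  proof
    fix x assume "x \<in> Cp p"
    then obtain r where r: "rep x (r * p)" by (auto simp: Cp_def)
    have "x = Mul r (P p)" using rep_unique[OF r rep_Mul[OF rep_P]] .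
    also have "\<dots> \<in> closure (Cp (r * q))" using Mul_closure h by blast
    also have "\<dots> \<subseteq> closure (Cp q)" by (intro closure_mono Cp_mult)
    finally show "x \<in> closure (Cp q)" .
  qed
qed simp

lemma Cp_smult: "c \<noteq> 0 \<Longrightarrow> Cp (smult c q) = Cp q"
proof -
  assume c: "c \<noteq> 0"
  have "Cp (smult c q) \<subseteq> Cp q" using Cp_mult[of "[:c:]" q] by simp
  moreover have "Cp q = Cp (smult (inverse c) (smult c q))" using c by simp
  then have "Cp q \<subseteq> Cp (smult c q)" using c Cp_mult[of "[:inverse c:]" "smult c q"] by simp
  ultimately show ?thesis by blast
qed

end



context hsp begin

abbreviation rp :: "nat \<Rightarrow> complex \<Rightarrow> bool" where "rp m b \<equiv> repro Om J ev m b"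

lemma Sft_J: "Sft (J x) = J (Sft x)"
  by (rule ev_inj) (simp add: Sft(2) ev_J)

lemma sc_Jx: "sc J c (J x) = J (sc J c x)"
  by (simp add: sc_def J_add J_scaleR JJ algebra_simps)

lemma repro_Suc:
  assumes "rp (Suc m) b" shows "rp m b"
proof -
  obtain L where L: "bounded_linear L" "\<forall>x. L (J x) = \<i> * L x"
     "\<forall>x p. (\<forall>z\<in>Om. ev x z = poly p z) \<longrightarrow> L x = poly ((pderiv ^^ Suc m) p) b"
    using assms unfolding repro_def by blast
  define L' where "L' x = L (Sft x - sc J b x) / of_nat (Suc m)" for x
  have "bounded_linear (\<lambda>x. L (Sft x - sc J b x))"
    by (rule bounded_linear_compose[OF L(1)]) (intro bounded_linear_sub Sft(1) sc_bl2)
  then have bl: "bounded_linear L'"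
    unfolding L'_def by (rule bounded_linear_compose[OF bounded_linear_divide])
  have Jx: "L' (J x) = \<i> * L' x" for x
  proof -
    have "Sft (J x) - sc J b (J x) = J (Sft x - sc J b x)" by (simp add: Sft_J sc_Jx J_diff)
    then show ?thesis unfolding L'_def using L(2) by simp
  qed
  have rpp: "L' x = poly ((pderiv^^m) p) b" if h: "\<forall>z\<in>Om. ev x z = poly p z" for x p
  proof -
    have "rep (Sft x - sc J b x) ([:-b,1:] * p)"
      using h by (simp add: rep_def ev_diff Sft(2) ev_sc algebra_simps)
    then have "L (Sft x - sc J b x) = Dv (Suc m) ([:-b,1:] * p) b"
      using L(3) by (simp add: rep_def Dv_def)
    also have "\<dots> = of_nat (Suc m) * Dv m p b" by (rule Dv_linSuc)
    finally show ?thesis unfolding L'_def Dv_def by (simp del: of_nat_Suc)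
  qed
  show ?thesis unfolding repro_def using bl Jx rpp by blast
qed

lemma repro_mono:
  assumes "j \<le> m" "rp m b" shows "rp j b"
  using assms(1)
proof (induction j rule: inc_induct)
  case base then show ?case using assms(2) .
next
  case (step n) then show ?case using repro_Suc by blast
qed

definition cnt :: "complex poly \<Rightarrow> complex \<Rightarrow> nat" where
  "cnt p b = card {j. j < order b p \<and> rp j b}"

lemma cnt_char:
  "(\<forall>j<cnt p b. rp j b) \<and> cnt p b \<le> order b p \<and> (cnt p b < order b p \<longrightarrow> \<not> rp (cnt p b) b)"
proof (cases "\<forall>j<order b p. rp j b")
  case True
  then have "{j. j < order b p \<and> rp j b} = {..<order b p}" by auto
  then have "cnt p b = order b p" by (simp add: cnt_def)
  then show ?thesis using True by auto
next
  case False
  then obtain j where j: "j < order b p" "\<not> rp j b" by blast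
  define k where "k = (LEAST j. \<not> rp j b)"
  have nk: "\<not> rp k b" unfolding k_def using LeastI[of "\<lambda>j. \<not> rp j b" j] j(2) .
  have kj: "k \<le> j" unfolding k_def using Least_le[of "\<lambda>j. \<not> rp j b" j] j(2) .
  have lt: "\<forall>i<k. rp i b" unfolding k_def using not_less_Least by blast
  have "{j. j < order b p \<and> rp j b} = {..<k}"
  proof (intro set_eqI iffI)
    fix i assume "i \<in> {j. j < order b p \<and> rp j b}"
    then have "rp i b" by simp
    then have "i < k" using nk repro_mono[of k i b] by (cases "i < k") auto
    then show "i \<in> {..<k}" by simp
  next
    fix i assume "i \<in> {..<k}"
    then show "i \<in> {j. j < order b p \<and> rp j b}" using lt kj j(1) by auto
  qed
  then have "cnt p b = k" by (simp add: cnt_def)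
  then show ?thesis using lt nk kj j(1) by auto
qed

lemma ro_upper: "rp m b \<Longrightarrow> enat m \<le> ro Om J ev b"
  unfolding ro_def by (rule Sup_upper) blast

lemma count_Rz:
  assumes p: "p \<noteq> 0"
  shows "count (Rz Om J ev p) b = cnt p b"
proof -
  let ?N = "\<lambda>\<gamma>. the_enat (min (enat (order \<gamma> p)) (ro Om J ev \<gamma> + 1))"
  have fin: "finite {z. poly p z = 0}" using poly_roots_finite[OF p] .
  have "count (Rz Om J ev p) b = (\<Sum>\<gamma>\<in>{z. poly p z = 0}. count (if rp 0 \<gamma> then replicate_mset (?N \<gamma>) \<gamma> else {#}) b)"
    unfolding Rz_def count_sum ..
  also have "\<dots> = (\<Sum>\<gamma>\<in>{z. poly p z = 0}. if b = \<gamma> then (if rp 0 b then ?N b else 0) else 0)"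
    by (intro sum.cong) auto
  also have "\<dots> = (if poly p b = 0 \<and> rp 0 b then ?N b else 0)" using fin by simp
  also have "\<dots> = cnt p b"
  proof (cases "poly p b = 0 \<and> rp 0 b")
    case True
    define ordb where "ordb = order b p"
    define c where "c = cnt p b"
    define R where "R = ro Om J ev b"
    have o1: "ordb \<ge> 1" using True p by (simp add: ordb_def order_root) 
    have cc: "(\<forall>j<c. rp j b)" "c \<le> ordb" "c < ordb \<longrightarrow> \<not> rp c b"
      using cnt_char[of p b] by (auto simp: c_def ordb_def)
    have "min (enat ordb) (R + 1) = enat c"
    proof (cases "c = ordb")
      case True
      then have "rp (ordb - 1) b" using cc o1 by simp
      then have A: "enat (ordb - 1) \<le> R" unfolding R_def by (rule ro_upper)
      have E: "enat (ordb - 1) + 1 = enat ordb" using o1 by (simp add: one_enat_def)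
      have "enat (ordb - 1) + 1 \<le> R + 1" using A by (rule add_right_mono)
      then have "enat ordb \<le> R + 1" unfolding E .
      then show ?thesis using True by (simp add: min_def)
    next
      case False
      then have lt: "c < ordb" using cc by simp
      then have nc: "\<not> rp c b" using cc by simp
      then have c0: "c \<noteq> 0" using True by (cases "c = 0") auto
      have "R \<le> enat (c - 1)" unfolding R_def ro_def
      proof (rule Sup_least)
        fix x assume "x \<in> {enat m |m. rp m b}"
        then obtain m where m: "x = enat m" "rp m b" by blast
        have "m < c" using nc repro_mono[of c m b] m(2) by (cases "m < c") auto
        then show "x \<le> enat (c - 1)" using m(1) by simp
      qed
      moreover have "enat (c - 1) \<le> R" unfolding R_def using cc c0 by (intro ro_upper) simp
      ultimately have "R = enat (c - 1)" by simp
      then have "R + 1 = enat c" using c0 by (simp add: one_enat_def)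
      then show ?thesis using lt by simp
    qed
    then show ?thesis using True by (simp add: R_def c_def ordb_def)
  next
    case False
    have E0: "{j. j < order b p \<and> rp j b} = {}"
    proof (cases "poly p b = 0")
      case True
      then have "\<not> rp 0 b" using False by simp
      then show ?thesis using repro_mono[of 0 _ b] by auto
    next
      case False
      then show ?thesis by (simp add: order_0I)
    qed
    have "(if poly p b = 0 \<and> rp 0 b then ?N b else 0) = 0" using False by (rule if_not_P)
    then show ?thesis unfolding cnt_def E0 by simp
  qed
  finally show ?thesis .
qed

end



context hsp begin

lemma Cp_add: "x \<in> Cp q \<Longrightarrow> y \<in> Cp q \<Longrightarrow> x + y \<in> Cp q"
proof -
  assume "x \<in> Cp q" "y \<in> Cp q"
  then obtain r r' where "rep x (r * q)" "rep y (r' * q)" by (auto simp: Cp_def)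
  then have "rep (x + y) ((r + r') * q)" using rep_add by (simp add: distrib_right)
  then show ?thesis unfolding Cp_def by blast
qed

lemma Cp_scaleR: "x \<in> Cp q \<Longrightarrow> a *\<^sub>R x \<in> Cp q"
proof -
  assume "x \<in> Cp q"
  then obtain r where "rep x (r * q)" by (auto simp: Cp_def)
  then have "rep (a *\<^sub>R x) (smult (complex_of_real a) r * q)" using rep_scaleR by simp
  then show ?thesis unfolding Cp_def by blast
qed

lemma Cp_J: "x \<in> Cp q \<Longrightarrow> J x \<in> Cp q"
proof -
  assume "x \<in> Cp q"
  then obtain r where "rep x (r * q)" by (auto simp: Cp_def)
  then have "rep (J x) (smult \<i> r * q)" using rep_J by simp
  then show ?thesis unfolding Cp_def by blast
qed

lemma Cp_zero: "0 \<in> Cp q"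
proof -
  have "rep 0 (0 * q)" using rep_zero by simp
  then show ?thesis unfolding Cp_def by blast
qed

lemma core:
  assumes low: "\<forall>j<k. rp j b"
    and nu: "P ([:-b,1:]^k) \<notin> closure (Cp ([:-b,1:]^Suc k))"
  shows "rp k b"
proof -
  define X where "X = [:-b,1:]"
  define M where "M = Cp (X^Suc k)"
  define u where "u = P (X^k)"
  have "\<forall>j. \<exists>L. j < k \<longrightarrow> (bounded_linear L \<and> (\<forall>x. L (J x) = \<i> * L x) \<and> (\<forall>x p. rep x p \<longrightarrow> L x = Dv j p b))"
    using low unfolding repro_def rep_def Dv_def by blast
  then obtain L where L: "\<forall>j. j < k \<longrightarrow> (bounded_linear (L j) \<and> (\<forall>x. L j (J x) = \<i> * L j x) \<and> (\<forall>x p. rep x p \<longrightarrow> L j x = Dv j p b))"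
    using choice[of "\<lambda>j L. j < k \<longrightarrow> (bounded_linear L \<and> (\<forall>x. L (J x) = \<i> * L x) \<and> (\<forall>x p. rep x p \<longrightarrow> L x = Dv j p b))"] by blast
  have Lbl: "\<And>j. j < k \<Longrightarrow> bounded_linear (L j)" using L by blast
  have LJ: "\<And>j x. j < k \<Longrightarrow> L j (J x) = \<i> * L j x" using L by blast
  have Lrep: "\<And>j x p. j < k \<Longrightarrow> rep x p \<Longrightarrow> L j x = Dv j p b" using L by blast
  have "\<exists>v. (\<forall>s\<in>M. inner s v = 0) \<and> inner u v \<noteq> 0"
    unfolding M_def
  proof (rule perp_exists)
    show "u \<notin> closure (Cp (X ^ Suc k))" using nu by (simp add: u_def X_def)
  qed (auto intro: Cp_add Cp_scaleR Cp_zero)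
  then obtain v where perp: "\<And>s. s \<in> M \<Longrightarrow> inner s v = 0" and uv: "inner u v \<noteq> 0" by blast
  have perpJ: "inner s (J v) = 0" if "s \<in> M" for s
  proof -
    have "J s \<in> M" using that Cp_J by (simp add: M_def)
    then show ?thesis using inner_Jskew[of s v] perp by simp
  qed
  define \<phi> where "\<phi> x = complex_of_real (inner x v) + \<i> * complex_of_real (inner x (J v))" for x
  have b1: "bounded_linear (\<lambda>x. complex_of_real (inner x v))"
    by (rule bounded_linear_compose[OF bounded_linear_of_real bounded_linear_inner_left])
  have b2: "bounded_linear (\<lambda>x. complex_of_real (inner x (J v)))"
    by (rule bounded_linear_compose[OF bounded_linear_of_real bounded_linear_inner_left])
  have b3: "bounded_linear (\<lambda>x. \<i> * complex_of_real (inner x (J v)))"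
    by (rule bounded_linear_compose[OF bounded_linear_mult_right b2])
  have \<phi>bl: "bounded_linear \<phi>" unfolding \<phi>_def by (rule bounded_linear_add[OF b1 b3])
  have \<phi>add: "\<phi> (x + y) = \<phi> x + \<phi> y" for x y by (simp add: \<phi>_def inner_add_left algebra_simps)
  have \<phi>scaleR: "\<phi> (a *\<^sub>R x) = complex_of_real a * \<phi> x" for a x by (simp add: \<phi>_def algebra_simps)
  have \<phi>J: "\<phi> (J x) = \<i> * \<phi> x" for x
  proof -
    have "inner (J x) v = - inner x (J v)" using inner_Jskew[of x v] by simp
    then show ?thesis by (simp add: \<phi>_def inner_JJ algebra_simps)
  qed
  have \<phi>sc: "\<phi> (sc J c x) = c * \<phi> x" for c x
  proof -
    have "\<phi> (sc J c x) = (complex_of_real (Re c) + \<i> * complex_of_real (Im c)) * \<phi> x"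
      by (simp add: sc_def \<phi>add \<phi>scaleR \<phi>J algebra_simps)
    then show ?thesis by (simp add: complex_eq[symmetric])
  qed
  have \<phi>M: "\<phi> s = 0" if "s \<in> M" for s using perp[OF that] perpJ[OF that] by (simp add: \<phi>_def)
  have \<phi>u: "\<phi> u \<noteq> 0"
  proof
    assume "\<phi> u = 0"
    then have "Re (\<phi> u) = 0" by simp
    then show False using uv by (simp add: \<phi>_def)
  qed
  define T where "T x = x - (\<Sum>j<k. sc J (L j x / fact j) (P (X^j)))" for x
  define LL where "LL x = fact k * (\<phi> (T x) / \<phi> u)" for x
  have "bounded_linear (\<lambda>x. \<Sum>j<k. sc J (L j x / fact j) (P (X^j)))"
  proof (rule bounded_linear_sum)
    fix j assume "j \<in> {..<k}"
    then have "bounded_linear (L j)" using Lbl by simp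
    then have "bounded_linear (\<lambda>x. L j x / fact j)" by (rule bounded_linear_compose[OF bounded_linear_divide])
    then show "bounded_linear (\<lambda>x. sc J (L j x / fact j) (P (X^j)))" by (rule sc_bl)
  qed
  then have Tbl: "bounded_linear T" unfolding T_def by (rule bounded_linear_sub[OF bounded_linear_ident])
  have "bounded_linear (\<lambda>x. \<phi> (T x))" by (rule bounded_linear_compose[OF \<phi>bl Tbl])
  then have "bounded_linear (\<lambda>x. \<phi> (T x) / \<phi> u)" by (rule bounded_linear_compose[OF bounded_linear_divide])
  then have LLbl: "bounded_linear LL" unfolding LL_def by (rule bounded_linear_compose[OF bounded_linear_mult_right])
  have TJ: "T (J x) = J (T x)" for x
  proof -
    have "J (T x) = J x - (\<Sum>j<k. J (sc J (L j x / fact j) (P (X^j))))" by (simp add: T_def J_diff J_sum)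
    also have "(\<Sum>j<k. J (sc J (L j x / fact j) (P (X^j)))) = (\<Sum>j<k. sc J (L j (J x) / fact j) (P (X^j)))"
    proof (rule sum.cong)
      fix j assume "j \<in> {..<k}"
      then have "L j (J x) / fact j = \<i> * (L j x / fact j)" using LJ by simp
      then show "J (sc J (L j x / fact j) (P (X^j))) = sc J (L j (J x) / fact j) (P (X^j))"
        unfolding sc_J[symmetric] by simp
    qed simp
    finally show ?thesis by (simp add: T_def)
  qed
  have LLJ: "LL (J x) = \<i> * LL x" for x by (simp add: LL_def TJ \<phi>J)
  have LLrep: "LL x = Dv k p b" if h: "rep x p" for x p
  proof -
    define r where "r = p - (\<Sum>j<k. smult (Dv j p b / fact j) (X^j))"
    have "T x = x - (\<Sum>j<k. sc J (Dv j p b / fact j) (P (X^j)))"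
      unfolding T_def using Lrep[OF _ h] by (intro arg_cong2[where f="(-)"] refl sum.cong) auto
    moreover have "rep (x - (\<Sum>j<k. sc J (Dv j p b / fact j) (P (X^j)))) r"
      unfolding r_def by (intro rep_diff h rep_sum rep_sc rep_P)
    ultimately have repT: "rep (T x) r" by simp
    have Dr: "\<forall>i<k. Dv i r b = 0"
    proof (intro allI impI)
      fix i assume i: "i < k"
      have "(\<Sum>j<k. (Dv j p b / fact j) * Dv i (X^j) b) = (\<Sum>j<k. if i = j then Dv i p b else 0)"
        by (intro sum.cong) (auto simp: X_def Dv_lin_pow)
      also have "\<dots> = Dv i p b" using i by simp
      finally show "Dv i r b = 0" by (simp add: r_def Dv_diff Dv_sum Dv_smult)
    qed
    obtain s where rs: "r = X^k * s" using Dv_zero_dvd[OF Dr] unfolding X_def by (auto elim: dvdE)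
    have "poly (s - [:poly s b:]) b = 0" by simp
    then have "X dvd (s - [:poly s b:])" unfolding X_def by (simp only: poly_eq_0_iff_dvd)
    then obtain s' where ss: "s - [:poly s b:] = X * s'" by (auto elim: dvdE)
    have s_eq: "s = [:poly s b:] + X * s'" using ss by (simp add: algebra_simps)
    have r2: "r = smult (poly s b) (X^k) + s' * X^Suc k"
    proof -
      have "r = X^k * ([:poly s b:] + X * s')" using rs s_eq by simp
      also have "\<dots> = smult (poly s b) (X^k) + s' * X^Suc k"
        by (simp add: distrib_left power_Suc mult_ac)
      finally show ?thesis .
    qed
    have wM: "P (s' * X^Suc k) \<in> M" unfolding M_def Cp_def using rep_P by blast
    have "rep (sc J (poly s b) u + P (s' * X^Suc k)) r"
      unfolding r2 u_def by (intro rep_add rep_sc rep_P)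
    then have Tx: "T x = sc J (poly s b) u + P (s' * X^Suc k)" by (rule rep_unique[OF repT])
    have "\<phi> (T x) = poly s b * \<phi> u" unfolding Tx \<phi>add \<phi>sc \<phi>M[OF wM] by simp
    then have "LL x = fact k * poly s b" using \<phi>u by (simp add: LL_def)
    moreover have "Dv k p b = fact k * poly s b"
    proof -
      have z: "(\<Sum>j<k. (Dv j p b / fact j) * Dv k (X^j) b) = 0"
        by (intro sum.neutral) (auto simp: X_def Dv_lin_pow)
      have "Dv k r b = Dv k p b - (\<Sum>j<k. (Dv j p b / fact j) * Dv k (X^j) b)"
        by (simp add: r_def Dv_diff Dv_sum Dv_smult)
      then have "Dv k p b = Dv k r b" using z by simp
      also have "\<dots> = fact k * poly s b" unfolding rs X_def by (rule Dv_pow_eq)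
      finally show ?thesis .
    qed
    ultimately show ?thesis by simp
  qed
  show ?thesis unfolding repro_def
    using LLbl LLJ LLrep by (auto simp: rep_def Dv_def)
qed

lemma Red:
  assumes "\<forall>j<k. rp j b" "\<not> rp k b"
  shows "closure (Cp ([:-b,1:]^k * f)) = closure (Cp ([:-b,1:]^Suc k * f))"
proof -
  define X where "X = [:-b,1:]"
  have u: "P (X^k) \<in> closure (Cp (X^Suc k))" using core assms unfolding X_def by blast
  have "rep (Mul f (P (X^k))) (f * X^k)" by (rule rep_Mul[OF rep_P])
  then have "Mul f (P (X^k)) = P (f * X^k)" by (rule rep_eqP)
  then have "P (X^k * f) = Mul f (P (X^k))" by (simp only: mult.commute)
  also have "\<dots> \<in> closure (Cp (f * X^Suc k))" using Mul_closure u by blast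
  also have "f * X^Suc k = X^Suc k * f" by (rule mult.commute)
  finally have "closure (Cp (X^k * f)) \<subseteq> closure (Cp (X^Suc k * f))" by (rule Gen)
  moreover have "X^Suc k * f = X * (X^k * f)" by (simp only: power_Suc mult.assoc)
  then have "Cp (X^Suc k * f) \<subseteq> Cp (X^k * f)" using Cp_mult[of X "X^k * f"] by (simp only:)
  then have "closure (Cp (X^Suc k * f)) \<subseteq> closure (Cp (X^k * f))" by (rule closure_mono)
  ultimately show ?thesis unfolding X_def by blast
qed

end



context hsp begin

lemma Reduce:
  assumes p: "p \<noteq> 0" and lt: "cnt p b < order b p"
  shows "\<exists>p'. p' \<noteq> 0 \<and> degree p' < degree p \<and> closure (Cp p) = closure (Cp p') \<and> (\<forall>\<gamma>. cnt p' \<gamma> = cnt p \<gamma>)"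
proof -
  define X where "X = [:-b,1:]"
  define k where "k = cnt p b"
  define ob where "ob = order b p"
  have cc: "\<forall>j<k. rp j b" "\<not> rp k b" using cnt_char[of p b] lt by (auto simp: k_def)
  have klt: "k < ob" using lt by (simp add: k_def ob_def)
  obtain f where f: "p = X^ob * f" using order_1[of b p] unfolding X_def ob_def by (auto elim: dvdE)
  define g where "g = X^(ob - Suc k) * f"
  define p' where "p' = X^k * g"
  have "ob = Suc k + (ob - Suc k)" using klt by simp
  then have "X^ob = X^Suc k * X^(ob - Suc k)" by (metis power_add)
  then have pe: "p = X^Suc k * g" by (simp add: f g_def mult.assoc)
  have pp: "p = X * p'" unfolding pe p'_def by (simp only: power_Suc mult.assoc)
  have p'0: "p' \<noteq> 0" using p pp by auto
  have X0: "X \<noteq> 0" by (simp add: X_def)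
  have dX: "degree X = 1" by (simp add: X_def)
  have deg: "degree p' < degree p" using pp X0 p'0 dX by (simp add: degree_mult_eq)
  have cl: "closure (Cp p) = closure (Cp p')"
    using Red[OF cc, of f] unfolding pe p'_def X_def using Red[OF cc, of g] by simp
  have ordX: "order \<gamma> X = (if \<gamma> = b then 1 else 0)" for \<gamma>
  proof (cases "\<gamma> = b")
    case True
    then show ?thesis using order_power_n_n[of b 1] by (simp add: X_def)
  next
    case False
    then have "poly X \<gamma> \<noteq> 0" by (simp add: X_def)
    then show ?thesis using False by (simp add: order_0I)
  qed
  have ordp: "order \<gamma> p = order \<gamma> X + order \<gamma> p'" for \<gamma>
    using order_mult[of X p' \<gamma>] pp p by simp
  have ceq: "cnt p' \<gamma> = cnt p \<gamma>" for \<gamma>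
  proof (cases "\<gamma> = b")
    case False
    then have "order \<gamma> p' = order \<gamma> p" using ordp[of \<gamma>] ordX[of \<gamma>] by simp
    then show ?thesis by (simp add: cnt_def)
  next
    case True
    have o': "order b p' = ob - 1" using ordp[of b] ordX[of b] by (simp add: ob_def)
    have "{j. j < ob - 1 \<and> rp j b} = {j. j < ob \<and> rp j b}"
    proof (intro set_eqI iffI)
      fix j assume "j \<in> {j. j < ob \<and> rp j b}"
      then have j: "j < ob" "rp j b" by auto
      have "j \<noteq> ob - 1"
      proof
        assume "j = ob - 1"
        then have "k \<le> j" using klt by simp
        then show False using repro_mono[of k j b] j(2) cc(2) by blast
      qed
      then show "j \<in> {j. j < ob - 1 \<and> rp j b}" using j by auto
    qed auto
    then show ?thesis using True o' by (simp add: cnt_def ob_def)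
  qed
  show ?thesis using p'0 deg cl ceq by blast
qed

lemma suff:
  "p \<noteq> 0 \<Longrightarrow> q \<noteq> 0 \<Longrightarrow> (\<forall>b. cnt p b = cnt q b) \<Longrightarrow> closure (Cp p) = closure (Cp q)"
proof (induction "degree p + degree q" arbitrary: p q rule: less_induct)
  case less
  show ?case
  proof (cases "\<exists>b. cnt p b < order b p")
    case True
    then obtain b where "cnt p b < order b p" by blast
    from Reduce[OF less.prems(1) this] obtain p' where
      p': "p' \<noteq> 0" "degree p' < degree p" "closure (Cp p) = closure (Cp p')" "\<forall>\<gamma>. cnt p' \<gamma> = cnt p \<gamma>"
      by blast
    have "closure (Cp p') = closure (Cp q)"
      using less.hyps[of p' q] p' less.prems by simp
    then show ?thesis using p' by simp
  next
    case F1: False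
    show ?thesis
    proof (cases "\<exists>b. cnt q b < order b q")
      case True
      then obtain b where "cnt q b < order b q" by blast
      from Reduce[OF less.prems(2) this] obtain q' where
        q': "q' \<noteq> 0" "degree q' < degree q" "closure (Cp q) = closure (Cp q')" "\<forall>\<gamma>. cnt q' \<gamma> = cnt q \<gamma>"
        by blast
      have "closure (Cp p) = closure (Cp q')"
        using less.hyps[of p q'] q' less.prems by simp
      then show ?thesis using q' by simp
    next
      case False
      have "order b p = order b q" for b
      proof -
        have "cnt p b = order b p" using F1 cnt_char[of p b] by (simp add: not_less le_antisym)
        moreover have "cnt q b = order b q" using False cnt_char[of q b] by (simp add: not_less le_antisym)
        ultimately show ?thesis using less.prems(3) by simp
      qed
      then have pr: "proots p = proots q" using less.prems(1,2) by (intro multiset_eqI) simp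
      define PP where "PP = (\<Prod>x\<in>#proots q. [:-x, 1:])"
      define a where "a = lead_coeff p"
      define d where "d = lead_coeff q"
      have hq: "smult d PP = q" using complex_poly_decompose_multiset[of q] by (simp add: PP_def d_def)
      have hp: "smult a PP = p" using complex_poly_decompose_multiset[of p] pr by (simp add: PP_def a_def)
      have d0: "d \<noteq> 0" using less.prems(2) by (simp add: d_def)
      have a0: "a \<noteq> 0" using less.prems(1) by (simp add: a_def)
      have "smult (a / d) q = smult (a / d) (smult d PP)" using hq by simp
      also have "\<dots> = smult a PP" using d0 by simp
      also have "\<dots> = p" by (rule hp)
      finally have "Cp p = Cp q" using Cp_smult[of "a / d" q] a0 d0 by simp
      then show ?thesis by simp
    qed
  qed
qed

lemma nec:
  assumes p: "p \<noteq> 0" and q: "q \<noteq> 0" and lt: "cnt p b < cnt q b"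
  shows "closure (Cp p) \<noteq> closure (Cp q)"
proof
  assume eq: "closure (Cp p) = closure (Cp q)"
  define a where "a = cnt p b"
  have cp: "a \<le> order b p" "a < order b p \<longrightarrow> \<not> rp a b" using cnt_char[of p b] by (auto simp: a_def)
  have cq: "\<forall>j<cnt q b. rp j b" "cnt q b \<le> order b q" using cnt_char[of q b] by auto
  have ra: "rp a b" using cq(1) lt by (simp add: a_def)
  have ao: "a = order b p" using cp ra by (cases "a < order b p") auto
  obtain L where Lbl: "bounded_linear L"
    and Lr: "\<forall>x p. (\<forall>z\<in>Om. ev x z = poly p z) \<longrightarrow> L x = poly ((pderiv ^^ a) p) b"
    using ra unfolding repro_def by blast
  have Lrep: "L x = Dv a p b" if "rep x p" for x p using Lr that by (simp add: rep_def Dv_def)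
  have LP: "L (P p) \<noteq> 0" using Lrep[OF rep_P] Dv_order[OF p, of b] ao by simp
  have sub: "Cp q \<subseteq> {x. L x = 0}"
  proof
    fix x assume "x \<in> Cp q"
    then obtain r where r: "rep x (r * q)" by (auto simp: Cp_def)
    have "[:-b,1:]^order b q dvd r * q" using order_1[of b q] by (rule dvd_mult)
    moreover have "a < order b q" using lt cq(2) by (simp add: a_def)
    ultimately have "Dv a (r * q) b = 0" by (intro Dv_dvd)
    then show "x \<in> {x. L x = 0}" using Lrep[OF r] by simp
  qed
  have "closed {x. L x = 0}"
    by (rule closed_Collect_eq) (auto intro: linear_continuous_on Lbl continuous_on_const)
  then have "closure (Cp q) \<subseteq> {x. L x = 0}" using sub by (rule closure_minimal[rotated])
  moreover have "P p \<in> closure (Cp q)" using eq P_in closure_subset by blast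
  ultimately show False using LP by auto
qed

end

theorem mainTheorem8:
  fixes \<Omega> :: "complex set" and J :: "'h::{real_inner,complete_space} \<Rightarrow> 'h"
    and ev :: "'h \<Rightarrow> complex \<Rightarrow> complex" and p q :: "complex poly"
  assumes "hfs \<Omega> J ev" and "p \<noteq> 0" and "q \<noteq> 0"
  shows "cyc \<Omega> ev (poly p) = cyc \<Omega> ev (poly q) \<longleftrightarrow> Rz \<Omega> J ev p = Rz \<Omega> J ev q"
proof -
  interpret hsp \<Omega> J ev by unfold_locales (rule assms(1))
  have R: "Rz \<Omega> J ev p = Rz \<Omega> J ev q \<longleftrightarrow> (\<forall>b. cnt p b = cnt q b)"
    using count_Rz assms(2,3) by (simp add: multiset_eq_iff)
  have C: "cyc \<Omega> ev (poly p) = cyc \<Omega> ev (poly q) \<longleftrightarrow> (\<forall>b. cnt p b = cnt q b)"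
  proof
    assume "cyc \<Omega> ev (poly p) = cyc \<Omega> ev (poly q)"
    then have eq: "closure (Cp p) = closure (Cp q)" by (simp add: cyc_eq)
    show "\<forall>b. cnt p b = cnt q b"
    proof
      fix b
      show "cnt p b = cnt q b"
      proof (rule ccontr)
        assume "cnt p b \<noteq> cnt q b"
        then consider "cnt p b < cnt q b" | "cnt q b < cnt p b" by linarith
        then show False
        proof cases
          case 1 then show False using nec[OF assms(2,3) 1] eq by simp
        next
          case 2 then show False using nec[OF assms(3,2) 2] eq by simp
        qed
      qed
    qed
  next
    assume "\<forall>b. cnt p b = cnt q b"
    then show "cyc \<Omega> ev (poly p) = cyc \<Omega> ev (poly q)"
      using suff[OF assms(2,3)] by (simp add: cyc_eq)
  qed
  show ?thesis using R C by simp
qed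


end
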